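(* Let $k \geq 1$ and $p \geq 2$ be integers. Then for every $\ell = 0, \dots, k-1$, $$\sum_{m=0}^{p-1} \beta_{m,\ell} = p\, \alpha_\ell ,$$ where $\alpha_\ell$ and $\beta_{m,\ell}$ are the coefficients defined in the context below.
   Context: For an integer $j \geq 0$ define the polynomials $$\gamma_j(\xi) = (-1)^j \int_0^{\xi} \binom{-s}{j}\, ds, \qquad \widetilde\gamma_j(\xi) = \frac{d}{d\xi}\gamma_j(\xi) = (-1)^j \binom{-\xi}{j} = \frac{\xi(\xi+1)\cdots(\xi+j-1)}{j!},$$ where $\binom{x}{j} = x(x-1)\cdots(x-j+1)/j!$ for real $x$ (and $\widetilde\gamma_0 \equiv 1$). The coefficients of the classical $k$-step Adams–Bashforth method are $$\alpha_\ell = (-1)^\ell \sum_{i=\ell}^{k-1} \binom{i}{\ell}\, \gamma_i(1), \qquad \ell = 0,\dots,k-1,$$ so that the $k$-step Adams–Bashforth scheme for $y' = By$ reads $y_{n+1} = y_n + \Delta t\, B \sum_{\ell=0}^{k-1}\alpha_\ell y_{n-\ell}$ (e.g. $k=2$: $\alpha = (3/2,-1/2)$; $k=3$: $\alpha=(23/12,-16/12,5/12)$). For $m = 0,\dots,p-1$ and $\ell = 0,\dots,k-1$ the local time-stepping coefficients are $$\beta_{m,\ell} = \sum_{i=0}^{k-1} \alpha_i \sum_{j=\ell}^{k-1} (-1)^\ell \binom{j}{\ell}\, \widetilde\gamma_j\!\left(\frac{m-i}{p}\right).$$ *)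

theory Defs
  imports "HOL-Analysis.Analysis"
begin

definition gam :: "nat \<Rightarrow> real \<Rightarrow> real" where
  "gam j xi = (-1) ^ j * (LBINT s=0..xi. ((- s) gchoose j))"

definition gamt :: "nat \<Rightarrow> real \<Rightarrow> real" where
  "gamt j xi = (-1) ^ j * ((- xi) gchoose j)"

definition AB_alpha :: "nat \<Rightarrow> nat \<Rightarrow> real" where
  "AB_alpha k l = (-1) ^ l * (\<Sum>i=l..k-1. real (i choose l) * gam i 1)"

definition LTS_beta :: "nat \<Rightarrow> nat \<Rightarrow> nat \<Rightarrow> nat \<Rightarrow> real" where
  "LTS_beta k p m l = (\<Sum>i=0..k-1. AB_alpha k i *
      (\<Sum>j=l..k-1. (-1) ^ l * real (j choose l) * gamt j ((real m - real i) / real p)))"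

end

theory Submission
  imports Defs "HOL-Computational_Algebra.Polynomial"
begin

fun G :: "nat \<Rightarrow> real poly" where
  "G 0 = 1"
| "G (Suc r) = smult (1 / (real r + 1)) (G r * [:real r, 1:])"

declare G.simps[simp del]

lemma gamt_poch: "gamt r x = pochhammer x r / fact r"
  by (simp add: gamt_def gbinomial_pochhammer flip: power_add)

lemma poly_G: "poly (G r) x = gamt r x"
proof (induction r)
  case 0 then show ?case by (simp add: gamt_def G.simps)
next
  case (Suc r)
  have "poly (G (Suc r)) x = gamt r x * (x + real r) / (real r + 1)"
    by (simp only: G.simps poly_smult poly_mult Suc.IH) (simp add: field_simps)
  also have "\<dots> = gamt (Suc r) x"
    by (simp add: gamt_poch pochhammer_Suc field_simps)
  finally show ?case .
qed

lemma G_deg: "degree (G r) = r \<and> coeff (G r) r \<noteq> 0"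
proof (induction r)
  case 0 then show ?case by (simp add: G.simps)
next
  case (Suc r)
  have nz: "G r \<noteq> 0" using Suc by auto
  have d0: "degree (G r * [:real r, 1:]) = degree (G r) + degree [:real r, 1:]"
    by (rule degree_mult_eq) (use nz in auto)
  have d: "degree (G r * [:real r, 1:]) = Suc r"
    by (simp only: d0) (use Suc in simp)
  have c0: "coeff (G r * [:real r, 1:]) (degree (G r) + degree [:real r, 1:]) = coeff (G r) (degree (G r)) * coeff [:real r, 1:] (degree [:real r, 1:])"
    by (rule coeff_mult_degree_sum)
  have c: "coeff (G r * [:real r, 1:]) (Suc r) = coeff (G r) r"
    using c0 Suc by simp
  have "(1 / (real r + 1)) \<noteq> 0" by simp
  then show ?case by (simp only: G.simps degree_smult_eq coeff_smult d c if_False) (use Suc in simp)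
qed

lemma span: "degree q \<le> d \<Longrightarrow> \<exists>c. \<forall>x. poly q x = (\<Sum>r\<le>d. c r * gamt r x)"
proof (induction d arbitrary: q)
  case 0
  then have "q = [:coeff q 0:]" by (metis degree_0_id le_zero_eq)
  then have "poly q x = coeff q 0" for x by (metis poly_pCons poly_0 mult_zero_right add.right_neutral)
  then show ?case by (intro exI[of _ "\<lambda>_. coeff q 0"]) (simp add: gamt_def)
next
  case (Suc d)
  define a where "a = coeff q (Suc d) / coeff (G (Suc d)) (Suc d)"
  define q' where "q' = q - smult a (G (Suc d))"
  have GS: "degree (G (Suc d)) = Suc d" "coeff (G (Suc d)) (Suc d) \<noteq> 0" using G_deg[of "Suc d"] by blast+
  have "degree q' \<le> d"
  proof (rule degree_le, intro allI impI)
    fix i assume "d < i"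
    show "coeff q' i = 0"
    proof (cases "i = Suc d")
      case True then show ?thesis using GS by (simp add: q'_def a_def)
    next
      case False
      then have "i > Suc d" using \<open>d < i\<close> by simp
      then have "coeff q i = 0" "coeff (G (Suc d)) i = 0"
        using Suc.prems GS by (auto intro: coeff_eq_0)
      then show ?thesis by (simp add: q'_def)
    qed
  qed
  then obtain c where c: "\<And>x. poly q' x = (\<Sum>r\<le>d. c r * gamt r x)" using Suc.IH by blast
  show ?case
  proof (intro exI[of _ "c(Suc d := a)"] allI)
    fix x
    have "poly q x = poly q' x + a * gamt (Suc d) x" by (simp add: q'_def poly_G)
    also have "\<dots> = (\<Sum>r\<le>Suc d. (c(Suc d := a)) r * gamt r x)"
      using c by simp
    finally show "poly q x = (\<Sum>r\<le>Suc d. (c(Suc d := a)) r * gamt r x)" .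
  qed
qed

lemma alt_choose:
  "(\<Sum>i\<le>j. (-1::real)^i * real (j choose i) * real (i choose r)) = (if j = r then (-1)^r else 0)"
proof (cases "r \<le> j")
  case False
  then have "\<And>i. i \<le> j \<Longrightarrow> (i choose r) = 0" by simp
  then show ?thesis using False by (simp add: sum.neutral)
next
  case True
  have "(\<Sum>i\<le>j. (-1::real)^i * real (j choose i) * real (i choose r))
      = (\<Sum>i\<in>{r..j}. (-1::real)^i * real (j choose i) * real (i choose r))"
    by (rule sum.mono_neutral_right) auto
  also have "\<dots> = (\<Sum>i\<in>{r..j}. (-1::real)^i * real (j choose r) * real ((j - r) choose (i - r)))"
    by (rule sum.cong) (auto simp: choose_mult mult.assoc simp flip: of_nat_mult)
  also have "\<dots> = (\<Sum>t\<in>{0..j-r}. (-1::real)^(t + r) * real (j choose r) * real ((j - r) choose t))"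
    using True by (intro sum.reindex_bij_witness[of _ "\<lambda>t. t + r" "\<lambda>i. i - r"]) auto
  also have "\<dots> = (-1)^r * real (j choose r) * (\<Sum>t\<le>j-r. (-1::real)^t * real ((j - r) choose t))"
    by (simp add: sum_distrib_left power_add atLeast0AtMost mult_ac)
  also have "\<dots> = (if j = r then (-1)^r else 0)"
  proof (cases "j = r")
    case False
    then have "j - r > 0" using True by simp
    then show ?thesis using choose_alternating_sum[of "j - r", where 'a=real] False by simp
  qed simp
  finally show ?thesis .
qed

lemma sum_if_ge: "(\<Sum>j=0..(n::nat). if i \<le> j then f j else 0) = (\<Sum>j=i..n. f j :: real)"
  by (rule sum.mono_neutral_cong_right) auto

lemma sum_if_le: "j \<le> (n::nat) \<Longrightarrow> (\<Sum>i=0..n. if i \<le> j then f i else 0) = (\<Sum>i\<le>j. f i :: real)"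
  by (rule sum.mono_neutral_cong_right) auto

lemma gamt_negnat: "gamt r (- real i) = (-1)^r * real (i choose r)"
  by (simp add: gamt_def binomial_gbinomial)

lemma AB_basis:
  assumes "r < k"
  shows "(\<Sum>i=0..k-1. AB_alpha k i * gamt r (- real i)) = gam r 1"
proof -
  have "(\<Sum>i=0..k-1. AB_alpha k i * gamt r (- real i))
     = (\<Sum>i=0..k-1. \<Sum>j=0..k-1. if i \<le> j then (-1)^i * real (j choose i) * gam j 1 * ((-1)^r * real (i choose r)) else 0)"
  proof (rule sum.cong[OF refl])
    fix i assume "i \<in> {0..k-1}"
    show "AB_alpha k i * gamt r (- real i) = (\<Sum>j=0..k-1. if i \<le> j then (-1)^i * real (j choose i) * gam j 1 * ((-1)^r * real (i choose r)) else 0)"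
      by (simp only: sum_if_ge) (simp add: AB_alpha_def gamt_negnat sum_distrib_left sum_distrib_right mult_ac)
  qed
  also have "\<dots> = (\<Sum>j=0..k-1. \<Sum>i=0..k-1. if i \<le> j then (-1)^i * real (j choose i) * gam j 1 * ((-1)^r * real (i choose r)) else 0)"
    by (rule sum.swap)
  also have "\<dots> = (\<Sum>j=0..k-1. gam j 1 * (-1)^r * (\<Sum>i\<le>j. (-1::real)^i * real (j choose i) * real (i choose r)))"
  proof (rule sum.cong[OF refl])
    fix j assume j: "j \<in> {0..k-1}"
    have jk: "j \<le> k - 1" using j by auto
    show "(\<Sum>i=0..k-1. if i \<le> j then (-1)^i * real (j choose i) * gam j 1 * ((-1)^r * real (i choose r)) else 0) = gam j 1 * (-1)^r * (\<Sum>i\<le>j. (-1::real)^i * real (j choose i) * real (i choose r))"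
      by (simp only: sum_if_le[OF jk]) (simp add: sum_distrib_left mult_ac)
  qed
  also have "\<dots> = (\<Sum>j=0..k-1. if j = r then gam j 1 else 0)"
    by (rule sum.cong[OF refl]) (simp add: alt_choose flip: power_add)
  also have "\<dots> = gam r 1" using assms by simp
  finally show ?thesis .
qed


lemma poly_integrable: "interval_lebesgue_integrable lborel (ereal a) (ereal b) (\<lambda>s. poly P s)"
proof (cases "a \<le> b")
  case True
  then show ?thesis
    by (intro interval_integrable_continuous_on) (auto intro!: continuous_intros)
next
  case False
  then have "interval_lebesgue_integrable lborel (ereal b) (ereal a) (\<lambda>s. poly P s)"
    by (intro interval_integrable_continuous_on) (auto intro!: continuous_intros)
  then show ?thesis by (simp add: interval_integrable_endpoints_reverse)
qed

lemma LBINT_sum: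
  fixes f :: "'b \<Rightarrow> real \<Rightarrow> real"
  assumes "finite A" "\<forall>r\<in>A. interval_lebesgue_integrable lborel a b (f r)"
  shows "interval_lebesgue_integrable lborel a b (\<lambda>s. \<Sum>r\<in>A. f r s) \<and>
    (LBINT s=a..b. (\<Sum>r\<in>A. f r s)) = (\<Sum>r\<in>A. LBINT s=a..b. f r s)"
  using assms
proof (induction A rule: finite_induct)
  case empty
  then show ?case by (simp add: interval_lebesgue_integrable_def interval_lebesgue_integral_def set_integrable_def)
next
  case (insert x F)
  then have i1: "interval_lebesgue_integrable lborel a b (f x)"
    and i2: "interval_lebesgue_integrable lborel a b (\<lambda>s. \<Sum>r\<in>F. f r s)"
    and e: "(LBINT s=a..b. (\<Sum>r\<in>F. f r s)) = (\<Sum>r\<in>F. LBINT s=a..b. f r s)" by auto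
  show ?case
    using interval_lebesgue_integral_add[OF i1 i2] e insert.hyps by simp
qed

lemma LBINT_gamt: "(LBINT s=0..1. gamt r s) = gam r 1"
  by (simp add: gamt_def gam_def one_ereal_def)

lemma AB_exact:
  assumes "k \<ge> 1" "degree q \<le> k - 1"
  shows "(\<Sum>i=0..k-1. AB_alpha k i * poly q (- real i)) = (LBINT s=0..1. poly q s)"
proof -
  obtain c where c: "\<And>x. poly q x = (\<Sum>r\<le>k-1. c r * gamt r x)" using span assms(2) by blast
  have int: "\<forall>r\<in>{..k-1}. interval_lebesgue_integrable lborel 0 1 (\<lambda>s. c r * gamt r s)"
  proof
    fix r
    have "interval_lebesgue_integrable lborel (ereal 0) (ereal 1) (\<lambda>s. poly (G r) s)"
      by (rule poly_integrable)
    then show "interval_lebesgue_integrable lborel 0 1 (\<lambda>s. c r * gamt r s)"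
      by (simp add: poly_G zero_ereal_def one_ereal_def)
  qed
  have "(\<Sum>i=0..k-1. AB_alpha k i * poly q (- real i))
      = (\<Sum>i=0..k-1. \<Sum>r\<le>k-1. c r * (AB_alpha k i * gamt r (- real i)))"
    by (simp add: c sum_distrib_left mult_ac)
  also have "\<dots> = (\<Sum>r\<le>k-1. c r * (\<Sum>i=0..k-1. AB_alpha k i * gamt r (- real i)))"
    by (subst sum.swap) (simp add: sum_distrib_left)
  also have "\<dots> = (\<Sum>r\<le>k-1. c r * gam r 1)"
    using assms(1) by (intro sum.cong refl) (subst AB_basis, auto)
  also have "\<dots> = (\<Sum>r\<le>k-1. LBINT s=0..1. c r * gamt r s)"
    by (simp add: LBINT_gamt)
  also have "\<dots> = (LBINT s=0..1. (\<Sum>r\<le>k-1. c r * gamt r s))"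
    using LBINT_sum[OF _ int] by simp
  also have "\<dots> = (LBINT s=0..1. poly q s)" by (simp add: c)
  finally show ?thesis .
qed


lemma LBINT_affine:
  assumes "p > 0"
  shows "(LBINT s=0..1. poly P (real m / real p + s * (1 / real p)))
       = real p * (LBINT y=ereal (real m / real p)..ereal ((real m + 1) / real p). poly P y)"
proof -
  have "(LBINT s=ereal 0..ereal 1. (1 / real p) *\<^sub>R poly P (real m / real p + s * (1 / real p)))
      = (LBINT y=ereal (real m / real p + 0 * (1 / real p))..ereal (real m / real p + 1 * (1 / real p)). poly P y)"
    by (rule interval_integral_substitution_finite[where g="\<lambda>s. real m / real p + s * (1 / real p)"
          and g'="\<lambda>_. 1 / real p"])
       (use assms in \<open>auto intro!: derivative_eq_intros continuous_intros\<close>)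
  moreover have "real m / real p + 1 * (1 / real p) = (real m + 1) / real p"
    by (simp add: add_divide_distrib)
  ultimately have "(1 / real p) * (LBINT s=0..1. poly P (real m / real p + s * (1 / real p)))
       = (LBINT y=ereal (real m / real p)..ereal ((real m + 1) / real p). poly P y)"
    by (simp add: zero_ereal_def one_ereal_def)
  then show ?thesis using assms by (simp add: field_simps)
qed

lemma telescope:
  assumes "p > 0"
  shows "(\<Sum>m<n. LBINT y=ereal (real m / real p)..ereal ((real m + 1) / real p). poly P y)
       = (LBINT y=ereal 0..ereal (real n / real p). poly P y)"
proof (induction n)
  case 0 then show ?case by simp
next
  case (Suc n)
  have le1: "0 \<le> real n / real p" using assms by simp
  have le2: "real n / real p \<le> (real n + 1) / real p" using assms by (simp add: divide_right_mono)
  have "(LBINT y=ereal 0..ereal (real n / real p). poly P y)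
      + (LBINT y=ereal (real n / real p)..ereal ((real n + 1) / real p). poly P y)
      = (LBINT y=ereal 0..ereal ((real n + 1) / real p). poly P y)"
    by (rule interval_integral_sum) (use le1 le2 poly_integrable in simp)
  then show ?case using Suc by (simp add: add.commute)
qed


theorem mainTheorem1:
  fixes k p l :: nat
  assumes "k \<ge> 1" and "p \<ge> 2" and "l \<le> k - 1"
  shows "(\<Sum>m=0..p-1. LTS_beta k p m l) = real p * AB_alpha k l"
proof -
  have p0: "p > 0" using assms by simp
  define h where "h = (\<Sum>j=l..k-1. smult ((-1)^l * real (j choose l)) (G j))"
  have ph: "poly h x = (\<Sum>j=l..k-1. (-1)^l * real (j choose l) * gamt j x)" for x
    by (simp add: h_def poly_sum poly_G)
  have dh: "degree h \<le> k - 1"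
    unfolding h_def
  proof (rule degree_sum_le)
    fix j assume "j \<in> {l..k-1}"
    then show "degree (smult ((-1)^l * real (j choose l)) (G j)) \<le> k - 1"
      using degree_smult_le[of _ "G j"] G_deg[of j] by (metis atLeastAtMost_iff order_trans)
  qed simp
  define Q where "Q = (\<Sum>m<p. pcompose h [:real m / real p, 1 / real p:])"
  have dQ: "degree Q \<le> k - 1"
    unfolding Q_def
  proof (rule degree_sum_le)
    fix m
    have "degree (pcompose h [:real m / real p, 1 / real p:]) \<le> degree h * degree [:real m / real p, 1 / real p:]"
      by (rule degree_pcompose_le)
    also have "\<dots> \<le> degree h" using p0 by simp
    finally show "degree (pcompose h [:real m / real p, 1 / real p:]) \<le> k - 1" using dh by simp
  qed simp
  have pQ: "poly Q x = (\<Sum>m<p. poly h (real m / real p + x * (1 / real p)))" for x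
    by (simp add: Q_def poly_sum poly_pcompose)
  have set: "{0..p-1} = {..<p}" using p0 by auto
  have "(\<Sum>m=0..p-1. LTS_beta k p m l) = (\<Sum>m<p. \<Sum>i=0..k-1. AB_alpha k i * poly h ((real m - real i) / real p))"
    by (simp only: set) (simp add: LTS_beta_def ph)
  also have "\<dots> = (\<Sum>i=0..k-1. AB_alpha k i * poly Q (- real i))"
    by (subst sum.swap) (simp add: pQ sum_distrib_left diff_divide_distrib)
  also have "\<dots> = (LBINT s=0..1. poly Q s)"
    by (rule AB_exact[OF assms(1) dQ])
  also have "\<dots> = (\<Sum>m<p. LBINT s=0..1. poly h (real m / real p + s * (1 / real p)))"
  proof -
    have int: "\<forall>m\<in>{..<p}. interval_lebesgue_integrable lborel 0 1 (\<lambda>s. poly h (real m / real p + s * (1 / real p)))"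
    proof
      fix m
      have "interval_lebesgue_integrable lborel (ereal 0) (ereal 1) (\<lambda>s. poly (pcompose h [:real m / real p, 1 / real p:]) s)"
        by (rule poly_integrable)
      then show "interval_lebesgue_integrable lborel 0 1 (\<lambda>s. poly h (real m / real p + s * (1 / real p)))"
        by (simp add: poly_pcompose zero_ereal_def one_ereal_def)
    qed
    show ?thesis using LBINT_sum[OF _ int] by (simp add: pQ)
  qed
  also have "\<dots> = real p * (\<Sum>m<p. LBINT y=ereal (real m / real p)..ereal ((real m + 1) / real p). poly h y)"
    by (simp only: LBINT_affine[OF p0] sum_distrib_left)
  also have "\<dots> = real p * (LBINT y=0..1. poly h y)"
    using p0 by (simp add: telescope zero_ereal_def one_ereal_def)
  also have "(LBINT y=0..1. poly h y) = (\<Sum>j=l..k-1. LBINT y=0..1. (-1)^l * real (j choose l) * gamt j y)"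
  proof -
    have int: "\<forall>j\<in>{l..k-1}. interval_lebesgue_integrable lborel 0 1 (\<lambda>y. (-1)^l * real (j choose l) * gamt j y)"
    proof
      fix j
      have "interval_lebesgue_integrable lborel (ereal 0) (ereal 1) (\<lambda>s. poly (G j) s)"
        by (rule poly_integrable)
      then show "interval_lebesgue_integrable lborel 0 1 (\<lambda>y. (-1)^l * real (j choose l) * gamt j y)"
        by (simp add: poly_G zero_ereal_def one_ereal_def)
    qed
    show ?thesis using LBINT_sum[OF _ int] by (simp add: ph)
  qed
  also have "\<dots> = AB_alpha k l"
    by (simp add: AB_alpha_def LBINT_gamt sum_distrib_left mult_ac)
  finally show ?thesis .
qed

end
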